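(* Let $0<r_i<r_o$, $0<h<H$, $n>0$, $p>0$, let $a_r$, $\boldsymbol\sigma^0$ and $c=3^{\frac{n-1}{2}}a_r|a_r|^{n-1}n^{-n}$ be as in the context, and let $\boldsymbol C(r)$ be the compliance matrix defined in the context. Let $\boldsymbol\sigma^-=(\sigma^-_r,\sigma^-_\theta,\sigma^-_z,\sigma^-_{rz})$ be a continuously differentiable axisymmetric stress field on $\Omega^-=[r_i,r_o]\times[0,h]$ and $\boldsymbol\sigma^+$ one on $\Omega^+=[r_i,r_o]\times[h,H]$, each satisfying the axisymmetric equilibrium equations on its domain, with $\sigma^\pm_r=\sigma^\pm_{rz}=0$ at $r=r_i$ and $r=r_o$, $\sigma^-_{rz}=0$ at $z=0$, and $\sigma^+_{rz}=0$ at $z=H$. Suppose there are continuously differentiable displacement fields $u^\pm=(u^\pm_r,u^\pm_z)$ on $\Omega^\pm$ such that the strains $$\varepsilon_r=\frac{\partial u_r}{\partial r},\ \varepsilon_\theta=\frac{u_r}{r},\ \varepsilon_z=\frac{\partial u_z}{\partial z},\ \varepsilon_{rz}=\frac12\Big(\frac{\partial u_r}{\partial z}+\frac{\partial u_z}{\partial r}\Big)$$ computed from $u^\pm$ satisfy $(\varepsilon_r,\varepsilon_\theta,\varepsilon_z,2\varepsilon_{rz})^T=\boldsymbol C(r)\,(\sigma^\pm_r,\sigma^\pm_\theta,\sigma^\pm_z,\sigma^\pm_{rz})^T$ on $\Omega^\pm$, with $u^-_z=0$ at $z=0$ and $u^+_z=0$ at $z=H$, and that at the interface $z=h$, for all $r\in[r_i,r_o]$,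 $$\sigma^+_{rz}=\sigma^-_{rz},\quad \sigma^+_z=\sigma^-_z,\quad u^+_z=u^-_z,\quad u^+_r-u^-_r=\frac{c}{r}.$$ Define $\boldsymbol\sigma^1=\boldsymbol\sigma^-$ on $\{z<h\}$ and $\boldsymbol\sigma^1=\boldsymbol\sigma^+$ on $\{z\ge h\}$. Then for every admissible virtual stress field $\delta\boldsymbol\sigma$, $$\int_{r_i}^{r_o}\!\!\int_0^H(\vec{\boldsymbol\sigma}^1)^T\boldsymbol C(r)\,\vec{\delta\boldsymbol\sigma}\;r\,dz\,dr=\int_{r_i}^{r_o}\!\!\int_0^h\dot{\boldsymbol\varepsilon}(\boldsymbol\sigma^0):\delta\boldsymbol\sigma\;r\,dz\,dr,$$ where $\vec{\boldsymbol\sigma}=(\sigma_r,\sigma_\theta,\sigma_z,\sigma_{rz})^T$; i.e. $\boldsymbol\sigma^1$ solves the first-order perturbation equation of the steady-state creep problem for the two-material pipe.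
   Context: Setting: steady-state creep of a pressurized pipe occupying $r_i\le r\le r_o$, $0\le z\le H$, with Norton's law $\dot{\boldsymbol\varepsilon}=A\,\boldsymbol s\,(\sigma_{vM})^{n-1}$, $\boldsymbol s=\boldsymbol\sigma-\frac13\mathrm{tr}(\boldsymbol\sigma)\boldsymbol I$, $\sigma_{vM}=\sqrt{\frac32\boldsymbol s:\boldsymbol s}$, where $A=1$ for $z\ge h$ and $A=1-s$ for $z<h$; the first-order perturbation $\boldsymbol\sigma^1=\frac{d\boldsymbol\sigma(s)}{ds}|_{s=0}$ is characterized by the linear variational equation in the conclusion. Write $\dot{\boldsymbol\varepsilon}(\boldsymbol\sigma)=\boldsymbol s(\sigma_{vM})^{n-1}$ (the $A=1$ law). The unperturbed (homogeneous pipe, $s=0$) solution is $\sigma^0_r=a+a_r r^{-2/n}$, $\sigma^0_\theta=a+a_\theta r^{-2/n}$, $\sigma^0_z=a+a_z r^{-2/n}$, $\sigma^0_{rz}=0$ with $a=p\,r_i^{2/n}/(r_o^{2/n}-r_i^{2/n})$, $a_r=-p\,r_i^{2/n}r_o^{2/n}/(r_o^{2/n}-r_i^{2/n})$, $a_\theta=\frac{n-2}{n}a_r$, $a_z=\frac{n-1}{n}a_r$. Axisymmetric stress fields have components $\sigma_r,\sigma_\theta,\sigma_z,\sigma_{rz}$ depending on $(r,z)$; the axisymmetric equilibrium equations are $\partial_r\sigma_r+\frac1r(\sigma_r-\sigma_\theta)+\partial_z\sigma_{rz}=0$ and $\partial_r\sigma_{rz}+\frac1r\sigma_{rz}+\partial_z\sigma_z=0$.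 An admissible virtual stress field is a continuously differentiable axisymmetric field on $[r_i,r_o]\times[0,H]$ satisfying these equilibrium equations and $\sigma_r=\sigma_{rz}=0$ at $r=r_i,r_o$, $\sigma_{rz}=0$ at $z=0,H$. The compliance matrix $\boldsymbol C(r)$ is the $4\times4$ Jacobian $\partial\vec{\dot{\boldsymbol\varepsilon}}/\partial\vec{\boldsymbol\sigma}$ evaluated at $\boldsymbol\sigma^0(r)$, where $\vec{\dot{\boldsymbol\varepsilon}}=(\dot\varepsilon_r,\dot\varepsilon_\theta,\dot\varepsilon_z,2\dot\varepsilon_{rz})^T$ is regarded as a function of $\vec{\boldsymbol\sigma}=(\sigma_r,\sigma_\theta,\sigma_z,\sigma_{rz})^T$ via $\dot{\boldsymbol\varepsilon}(\boldsymbol\sigma)=\boldsymbol s(\sigma_{vM})^{n-1}$. Also $\boldsymbol\varepsilon:\boldsymbol\sigma=\varepsilon_r\sigma_r+\varepsilon_\theta\sigma_\theta+\varepsilon_z\sigma_z+2\varepsilon_{rz}\sigma_{rz}$. *)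

theory Defs
  imports "HOL-Analysis.Analysis"
begin

text \<open>Stress/strain vectors are elements of real^4 with the component convention
  index 1 = r, 2 = theta, 3 = z, 4 = rz (for strains: 2*eps_rz).\<close>

definition vec4 :: "real \<Rightarrow> real \<Rightarrow> real \<Rightarrow> real \<Rightarrow> real^4" where
  "vec4 a b c d = (\<chi> i. if i = 1 then a else if i = 2 then b else if i = 3 then c else d)"

text \<open>Norton strain rate with A = 1, as a map on stress vectors (output in Voigt form
  (eps_r, eps_theta, eps_z, 2 eps_rz)).\<close>

definition epsdot :: "real \<Rightarrow> real^4 \<Rightarrow> real^4" where
  "epsdot n \<sigma> =
     (let m = (\<sigma>$1 + \<sigma>$2 + \<sigma>$3) / 3;
          sr = \<sigma>$1 - m; st = \<sigma>$2 - m; sz = \<sigma>$3 - m; srz = \<sigma>$4;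
          vM = sqrt (3/2 * (sr^2 + st^2 + sz^2 + 2 * srz^2));
          f = vM powr (n - 1)
      in vec4 (sr * f) (st * f) (sz * f) (2 * srz * f))"

definition coef_a :: "real \<Rightarrow> real \<Rightarrow> real \<Rightarrow> real \<Rightarrow> real" where
  "coef_a ri ro p n = p * ri powr (2/n) / (ro powr (2/n) - ri powr (2/n))"

definition coef_ar :: "real \<Rightarrow> real \<Rightarrow> real \<Rightarrow> real \<Rightarrow> real" where
  "coef_ar ri ro p n = - p * ri powr (2/n) * ro powr (2/n) / (ro powr (2/n) - ri powr (2/n))"

definition sigma0 :: "real \<Rightarrow> real \<Rightarrow> real \<Rightarrow> real \<Rightarrow> real \<Rightarrow> real^4" where
  "sigma0 ri ro p n r =
     (let a = coef_a ri ro p n; ar = coef_ar ri ro p n;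
          ath = (n - 2) / n * ar; az = (n - 1) / n * ar
      in vec4 (a + ar * r powr (-2/n)) (a + ath * r powr (-2/n)) (a + az * r powr (-2/n)) 0)"

definition compliance :: "real \<Rightarrow> real \<Rightarrow> real \<Rightarrow> real \<Rightarrow> real \<Rightarrow> real^4^4" where
  "compliance ri ro p n r = jacobian (epsdot n) (at (sigma0 ri ro p n r))"

definition C1_partials ::
  "(real \<times> real \<Rightarrow> real) \<Rightarrow> (real \<times> real \<Rightarrow> real) \<Rightarrow> (real \<times> real \<Rightarrow> real) \<Rightarrow> (real \<times> real) set \<Rightarrow> bool" where
  "C1_partials f fr fz S \<longleftrightarrow>
     (\<forall>x\<in>S. (f has_derivative (\<lambda>(a, b). fr x * a + fz x * b)) (at x within S))
     \<and> continuous_on S fr \<and> continuous_on S fz"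

definition C1_on :: "(real \<times> real) set \<Rightarrow> (real \<times> real \<Rightarrow> real) \<Rightarrow> bool" where
  "C1_on S f \<longleftrightarrow> (\<exists>fr fz. C1_partials f fr fz S)"

definition equilibrium_C1 :: "(real \<times> real) set \<Rightarrow> (real \<times> real \<Rightarrow> real^4) \<Rightarrow> bool" where
  "equilibrium_C1 S \<sigma> \<longleftrightarrow>
     (\<exists>sr_r sr_z st_r st_z sz_r sz_z srz_r srz_z.
        C1_partials (\<lambda>x. \<sigma> x $ 1) sr_r sr_z S \<and>
        C1_partials (\<lambda>x. \<sigma> x $ 2) st_r st_z S \<and>
        C1_partials (\<lambda>x. \<sigma> x $ 3) sz_r sz_z S \<and>
        C1_partials (\<lambda>x. \<sigma> x $ 4) srz_r srz_z S \<and>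
        (\<forall>r z. (r, z) \<in> S \<longrightarrow>
           sr_r (r, z) + (\<sigma> (r, z) $ 1 - \<sigma> (r, z) $ 2) / r + srz_z (r, z) = 0 \<and>
           srz_r (r, z) + \<sigma> (r, z) $ 4 / r + sz_z (r, z) = 0))"

definition admissible :: "real \<Rightarrow> real \<Rightarrow> real \<Rightarrow> (real \<times> real \<Rightarrow> real^4) \<Rightarrow> bool" where
  "admissible ri ro H \<delta>\<sigma> \<longleftrightarrow>
     equilibrium_C1 ({ri..ro} \<times> {0..H}) \<delta>\<sigma> \<and>
     (\<forall>z\<in>{0..H}. \<forall>r\<in>{ri, ro}. \<delta>\<sigma> (r, z) $ 1 = 0 \<and> \<delta>\<sigma> (r, z) $ 4 = 0) \<and>
     (\<forall>r\<in>{ri..ro}. \<forall>z\<in>{0, H}. \<delta>\<sigma> (r, z) $ 4 = 0)"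

definition compatible ::
  "real \<Rightarrow> real \<Rightarrow> real \<Rightarrow> real \<Rightarrow> (real \<times> real) set \<Rightarrow>
   (real \<times> real \<Rightarrow> real) \<Rightarrow> (real \<times> real \<Rightarrow> real) \<Rightarrow> (real \<times> real \<Rightarrow> real^4) \<Rightarrow> bool" where
  "compatible ri ro p n S ur uz \<sigma> \<longleftrightarrow>
     (\<exists>ur_r ur_z uz_r uz_z.
        C1_partials ur ur_r ur_z S \<and> C1_partials uz uz_r uz_z S \<and>
        (\<forall>r z. (r, z) \<in> S \<longrightarrow>
           vec4 (ur_r (r, z)) (ur (r, z) / r) (uz_z (r, z)) (ur_z (r, z) + uz_r (r, z))
             = compliance ri ro p n r *v \<sigma> (r, z)))"

end

theory Submission
  imports Defs
begin


lemma vec4_nth[simp]: "vec4 a b c d $ 1 = a" "vec4 a b c d $ 2 = b" "vec4 a b c d $ 3 = c" "vec4 a b c d $ 4 = d"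
  by (simp_all add: vec4_def)

lemma inner_vec4: "vec4 a b c d \<bullet> y = a * y$1 + b * y$2 + c * y$3 + d * y$4"
  by (simp add: inner_vec_def sum_4)

lemma inner4: "(x::real^4) \<bullet> y = x$1 * y$1 + x$2 * y$2 + x$3 * y$3 + x$4 * y$4"
  by (simp add: inner_vec_def sum_4)

definition mD :: "real^4 \<Rightarrow> real^4" where
  "mD s = vec4 (s$1 - (s$1+s$2+s$3)/3) (s$2 - (s$1+s$2+s$3)/3) (s$3 - (s$1+s$2+s$3)/3) (2 * s$4)"

definition mG :: "real^4 \<Rightarrow> real" where
  "mG s = 3/2 * ((s$1 - (s$1+s$2+s$3)/3)^2 + (s$2 - (s$1+s$2+s$3)/3)^2 + (s$3 - (s$1+s$2+s$3)/3)^2 + 2 * (s$4)^2)"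

lemma mD_linear: "linear mD"
  by (rule linearI) (simp_all add: vec_eq_iff forall_4 mD_def field_simps)

lemma mD_sym: "mD h \<bullet> k = mD k \<bullet> h"
  by (simp add: mD_def inner_vec4 field_simps)

lemma epsdot_eq: "epsdot n s = (sqrt (mG s) powr (n - 1)) *\<^sub>R mD s"
  by (simp add: epsdot_def mG_def mD_def Let_def vec_eq_iff forall_4 algebra_simps)

lemma nth_deriv: "((\<lambda>x::real^4. x$i) has_derivative (\<lambda>h. h$i)) F"
  by (rule bounded_linear_imp_has_derivative) auto

lemma mG_deriv: "(mG has_derivative (\<lambda>h. 3 * (mD s \<bullet> h))) (at s)"
  unfolding mG_def[abs_def]
  apply (auto intro!: derivative_eq_intros nth_deriv)
  apply (rule ext)
  apply (simp add: mD_def inner_vec4 field_simps power2_eq_square)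
  done

lemma mG_nonneg: "0 \<le> mG s"
  unfolding mG_def by (intro mult_nonneg_nonneg add_nonneg_nonneg) auto

lemma epsdot_eq2: "epsdot n s = (mG s powr ((n - 1)/2)) *\<^sub>R mD s"
proof -
  have "sqrt (mG s) powr (n - 1) = mG s powr ((n - 1)/2)"
    using mG_nonneg[of s] by (simp add: powr_half_sqrt[symmetric] powr_powr)
  then show ?thesis by (simp add: epsdot_eq)
qed

definition Lop :: "real \<Rightarrow> real^4 \<Rightarrow> real^4 \<Rightarrow> real^4" where
  "Lop n s h = (mG s powr ((n - 1)/2)) *\<^sub>R mD h
     + (mG s powr ((n - 1)/2) * (3 * (mD s \<bullet> h) * ((n - 1)/2) / mG s)) *\<^sub>R mD s"

lemma epsdot_deriv:
  assumes "0 < mG s"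
  shows "(epsdot n has_derivative Lop n s) (at s)"
proof -
  have e: "epsdot n = (\<lambda>x. (mG x powr ((n - 1)/2)) *\<^sub>R mD x)"
    by (rule ext) (simp add: epsdot_eq2)
  have dD: "(mD has_derivative mD) (at s)"
    using mD_linear by (simp add: linear_conv_bounded_linear bounded_linear_imp_has_derivative)
  have dF: "((\<lambda>x. mG x powr ((n - 1)/2)) has_derivative
     (\<lambda>h. mG s powr ((n - 1)/2) * (0 * ln (mG s) + 3 * (mD s \<bullet> h) * ((n - 1)/2) / mG s))) (at s)"
    by (rule has_derivative_powr[OF mG_deriv has_derivative_const assms]) simp
  show ?thesis unfolding e Lop_def
    using has_derivative_scaleR[OF dF dD] by (simp add: add.commute)
qed

lemma Lop_sym: "Lop n s h \<bullet> k = h \<bullet> Lop n s k"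
  unfolding Lop_def inner_add_left inner_add_right inner_scaleR_left inner_scaleR_right
  by (simp add: mD_sym[of h k] mD_sym[of s k] mD_sym[of s h] inner_commute[of h] inner_commute[of k] algebra_simps)



lemma mD_s0:
  assumes "n > 0"
  shows "mD (vec4 (a + A * t) (a + (n - 2) / n * A * t) (a + (n - 1) / n * A * t) 0) = vec4 (A*t/n) (-(A*t/n)) 0 0"
  using assms by (simp add: mD_def vec_eq_iff forall_4 field_simps)

lemma mG_s0:
  assumes "n > 0"
  shows "mG (vec4 (a + A * t) (a + (n - 2) / n * A * t) (a + (n - 1) / n * A * t) 0) = 3 * (A*t/n)^2"
  using assms by (simp add: mG_def field_simps power2_eq_square)

lemma sq_powr_half:
  fixes x m :: real
  assumes "0 \<le> x" shows "(x^2) powr (m/2) = x powr m"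
proof (cases "x = 0")
  case True then show ?thesis by simp
next
  case False
  then have "x > 0" using assms by simp
  have "(x powr 2) powr (m/2) = x powr m" by (simp add: powr_powr)
  moreover have "x powr 2 = x^2" using \<open>x > 0\<close> by simp
  ultimately show ?thesis by simp
qed

lemma powr_s0:
  fixes A t n :: real
  assumes "n > 0" "t > 0"
  shows "(3 * (A*t/n)^2) powr ((n - 1)/2) * (A*t/n) = 3 powr ((n - 1)/2) * A * \<bar>A\<bar> powr (n - 1) * n powr (- n) * t powr n"
proof -
  have "(3 * (A*t/n)^2) powr ((n - 1)/2) = 3 powr ((n - 1)/2) * ((\<bar>A*t/n\<bar>)^2) powr ((n - 1)/2)"
    unfolding power2_abs by (rule powr_mult; simp)
  also have "((\<bar>A*t/n\<bar>)^2) powr ((n - 1)/2) = \<bar>A*t/n\<bar> powr (n - 1)"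
    by (rule sq_powr_half) simp
  also have "\<bar>A*t/n\<bar> powr (n - 1) = \<bar>A\<bar> powr (n - 1) * t powr (n - 1) / n powr (n - 1)"
    using assms by (simp add: abs_mult powr_mult powr_divide)
  finally have "(3 * (A*t/n)^2) powr ((n - 1)/2) * (A*t/n) =
       3 powr ((n - 1)/2) * A * \<bar>A\<bar> powr (n - 1) * (t powr (n - 1) * t) / (n powr (n - 1) * n)"
    by (simp add: field_simps)
  also have "t powr (n - 1) * t = t powr n"
    using assms by (simp add: powr_diff)
  also have "n powr (n - 1) * n = n powr n"
    using assms by (simp add: powr_diff)
  also have "3 powr ((n - 1)/2) * A * \<bar>A\<bar> powr (n - 1) * t powr n / n powr n
      = 3 powr ((n - 1)/2) * A * \<bar>A\<bar> powr (n - 1) * t powr n * inverse (n powr n)"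
    by (simp only: divide_inverse)
  also have "inverse (n powr n) = n powr (- n)"
    by (simp only: powr_minus)
  finally show ?thesis
    by (simp only: mult_ac)
qed



lemma coef_ar_neg:
  assumes "0 < ri" "ri < ro" "0 < n" "0 < p"
  shows "coef_ar ri ro p n < 0"
proof -
  have "ri powr (2/n) < ro powr (2/n)" using assms by (intro powr_less_mono2) auto
  moreover have "0 < ri powr (2/n)" "0 < ro powr (2/n)" using assms by auto
  ultimately show ?thesis using assms unfolding coef_ar_def
    by (simp add: divide_neg_pos)
qed

lemma sigma0_facts:
  assumes "0 < ri" "ri < ro" "0 < n" "0 < p" "0 < r"
  shows "0 < mG (sigma0 ri ro p n r)"
    and "epsdot n (sigma0 ri ro p n r) =
      vec4 ((let ar = coef_ar ri ro p n
           in 3 powr ((n - 1) / 2) * ar * \<bar>ar\<bar> powr (n - 1) * n powr (- n)) / r^2)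
           (-((let ar = coef_ar ri ro p n
           in 3 powr ((n - 1) / 2) * ar * \<bar>ar\<bar> powr (n - 1) * n powr (- n)) / r^2)) 0 0"
proof -
  define A where "A = coef_ar ri ro p n"
  define t where "t = r powr (-2/n)"
  have A: "A \<noteq> 0" using coef_ar_neg[OF assms(1-4)] by (simp add: A_def)
  have t: "t > 0" using assms by (simp add: t_def)
  have s0: "sigma0 ri ro p n r = vec4 (coef_a ri ro p n + A * t) (coef_a ri ro p n + (n - 2) / n * A * t)
        (coef_a ri ro p n + (n - 1) / n * A * t) 0"
    by (simp add: sigma0_def A_def t_def Let_def)
  show "0 < mG (sigma0 ri ro p n r)"
    unfolding s0 mG_s0[OF assms(3)] using A t assms by simp
  have tn: "t powr n = 1 / r^2"
  proof -
    have "t powr n = r powr (-2)" using assms by (simp add: t_def powr_powr)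
    also have "\<dots> = 1 / r^2" using assms by (simp add: powr_minus powr_realpow divide_inverse)
    finally show ?thesis .
  qed
  have "epsdot n (sigma0 ri ro p n r) = ((3 * (A*t/n)^2) powr ((n - 1)/2)) *\<^sub>R vec4 (A*t/n) (-(A*t/n)) 0 0"
    unfolding epsdot_eq2 s0 mG_s0[OF assms(3)] mD_s0[OF assms(3)] ..
  also have "\<dots> = vec4 ((3 * (A*t/n)^2) powr ((n - 1)/2) * (A*t/n)) (- ((3 * (A*t/n)^2) powr ((n - 1)/2) * (A*t/n))) 0 0"
    by (simp add: vec_eq_iff forall_4)
  also have "\<dots> = vec4 ((3 powr ((n - 1) / 2) * A * \<bar>A\<bar> powr (n - 1) * n powr (- n)) / r^2)
           (-((3 powr ((n - 1) / 2) * A * \<bar>A\<bar> powr (n - 1) * n powr (- n)) / r^2)) 0 0"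
    unfolding powr_s0[OF assms(3) t] tn by simp
  finally show "epsdot n (sigma0 ri ro p n r) =
      vec4 ((let ar = coef_ar ri ro p n
           in 3 powr ((n - 1) / 2) * ar * \<bar>ar\<bar> powr (n - 1) * n powr (- n)) / r^2)
           (-((let ar = coef_ar ri ro p n
           in 3 powr ((n - 1) / 2) * ar * \<bar>ar\<bar> powr (n - 1) * n powr (- n)) / r^2)) 0 0"
    by (simp add: A_def Let_def)
qed

lemma compliance_Lop:
  assumes "0 < mG (sigma0 ri ro p n r)"
  shows "compliance ri ro p n r *v x = Lop n (sigma0 ri ro p n r) x"
proof -
  let ?s = "sigma0 ri ro p n r"
  have d: "(epsdot n has_derivative Lop n ?s) (at ?s)" by (rule epsdot_deriv[OF assms])
  then have "epsdot n differentiable (at ?s)" unfolding differentiable_def by blast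
  then have "(epsdot n has_derivative (\<lambda>h. jacobian (epsdot n) (at ?s) *v h)) (at ?s)"
    by (simp add: jacobian_works)
  then have "(\<lambda>h. jacobian (epsdot n) (at ?s) *v h) = Lop n ?s"
    using d by (rule has_derivative_unique)
  then show ?thesis unfolding compliance_def by metis
qed

lemma compliance_sym:
  assumes "0 < mG (sigma0 ri ro p n r)"
  shows "x \<bullet> (compliance ri ro p n r *v y) = (compliance ri ro p n r *v x) \<bullet> y"
  unfolding compliance_Lop[OF assms] by (simp add: Lop_sym)



lemma C1_cont: "C1_partials f fr fz S \<Longrightarrow> continuous_on S f"
  unfolding C1_partials_def continuous_on_eq_continuous_within
  using has_derivative_continuous by blast

lemma C1_cont_r: "C1_partials f fr fz S \<Longrightarrow> continuous_on S fr" by (simp add: C1_partials_def)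
lemma C1_cont_z: "C1_partials f fr fz S \<Longrightarrow> continuous_on S fz" by (simp add: C1_partials_def)

lemma C1_subset: "C1_partials f fr fz S \<Longrightarrow> T \<subseteq> S \<Longrightarrow> C1_partials f fr fz T"
  unfolding C1_partials_def by (meson has_derivative_subset continuous_on_subset subsetD)

lemma eq_subset: "equilibrium_C1 S \<sigma> \<Longrightarrow> T \<subseteq> S \<Longrightarrow> equilibrium_C1 T \<sigma>"
  unfolding equilibrium_C1_def by (smt (verit, best) C1_subset subsetD)

lemma partial_r:
  assumes "C1_partials f fr fz ({ri..ro}\<times>{a..b})" "r \<in> {ri..ro}" "z \<in> {a..b}"
  shows "((\<lambda>r. f (r,z)) has_real_derivative fr (r,z)) (at r within {ri..ro})"
proof -
  have d1: "((\<lambda>r. (r,z)) has_derivative (\<lambda>h. (h,0))) (at r within {ri..ro})"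
    by (auto intro!: derivative_eq_intros)
  have "(f has_derivative (\<lambda>(a', b'). fr (r,z) * a' + fz (r,z) * b')) (at (r,z) within {ri..ro}\<times>{a..b})"
    using assms unfolding C1_partials_def by auto
  then have d2: "(f has_derivative (\<lambda>(a', b'). fr (r,z) * a' + fz (r,z) * b')) (at ((\<lambda>r. (r,z)) r) within (\<lambda>r. (r,z)) ` {ri..ro})"
    by (rule has_derivative_subset) (use assms in auto)
  have "((f \<circ> (\<lambda>r. (r,z))) has_derivative ((\<lambda>(a', b'). fr (r,z) * a' + fz (r,z) * b') \<circ> (\<lambda>h. (h,0)))) (at r within {ri..ro})"
    by (rule diff_chain_within[OF d1 d2])
  then show ?thesis
    unfolding has_field_derivative_def by (simp add: o_def mult.commute[of _ "fr (r,z)"])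
qed

lemma partial_z:
  assumes "C1_partials f fr fz ({ri..ro}\<times>{a..b})" "r \<in> {ri..ro}" "z \<in> {a..b}"
  shows "((\<lambda>z. f (r,z)) has_real_derivative fz (r,z)) (at z within {a..b})"
proof -
  have d1: "((\<lambda>z. (r,z)) has_derivative (\<lambda>h. (0,h))) (at z within {a..b})"
    by (auto intro!: derivative_eq_intros)
  have "(f has_derivative (\<lambda>(a', b'). fr (r,z) * a' + fz (r,z) * b')) (at (r,z) within {ri..ro}\<times>{a..b})"
    using assms unfolding C1_partials_def by auto
  then have d2: "(f has_derivative (\<lambda>(a', b'). fr (r,z) * a' + fz (r,z) * b')) (at ((\<lambda>z. (r,z)) z) within (\<lambda>z. (r,z)) ` {a..b})"
    by (rule has_derivative_subset) (use assms in auto)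
  have "((f \<circ> (\<lambda>z. (r,z))) has_derivative ((\<lambda>(a', b'). fr (r,z) * a' + fz (r,z) * b') \<circ> (\<lambda>h. (0,h)))) (at z within {a..b})"
    by (rule diff_chain_within[OF d1 d2])
  then show ?thesis
    unfolding has_field_derivative_def by (simp add: o_def mult.commute[of _ "fz (r,z)"])
qed



lemma green:
  fixes \<sigma> :: "real \<times> real \<Rightarrow> real^4"
  assumes "0 < ri" "ri \<le> ro" "a \<le> b"
    and eq: "equilibrium_C1 ({ri..ro}\<times>{a..b}) \<sigma>"
    and U1: "C1_partials ur ur_r ur_z ({ri..ro}\<times>{a..b})"
    and U2: "C1_partials uz uz_r uz_z ({ri..ro}\<times>{a..b})"
  shows "((\<lambda>r. integral {a..b} (\<lambda>z. (ur_r (r,z) * \<sigma> (r,z)$1 + ur (r,z) / r * \<sigma> (r,z)$2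
            + uz_z (r,z) * \<sigma> (r,z)$3 + (ur_z (r,z) + uz_r (r,z)) * \<sigma> (r,z)$4) * r)) has_integral
     (integral {ri..ro} (\<lambda>r. r * (ur (r,b) * \<sigma> (r,b)$4 + uz (r,b) * \<sigma> (r,b)$3)
                              - r * (ur (r,a) * \<sigma> (r,a)$4 + uz (r,a) * \<sigma> (r,a)$3))
      + integral {a..b} (\<lambda>z. ro * (ur (ro,z) * \<sigma> (ro,z)$1 + uz (ro,z) * \<sigma> (ro,z)$4)
                              - ri * (ur (ri,z) * \<sigma> (ri,z)$1 + uz (ri,z) * \<sigma> (ri,z)$4)))) {ri..ro}"
proof -
  define S where "S = {ri..ro}\<times>{a..b}"
  obtain s1r s1z s2r s2z s3r s3z s4r s4z where
    C1: "C1_partials (\<lambda>x. \<sigma> x $ 1) s1r s1z S" "C1_partials (\<lambda>x. \<sigma> x $ 2) s2r s2z S"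
        "C1_partials (\<lambda>x. \<sigma> x $ 3) s3r s3z S" "C1_partials (\<lambda>x. \<sigma> x $ 4) s4r s4z S"
    and E: "\<And>r z. (r,z) \<in> S \<Longrightarrow> s1r (r,z) + (\<sigma> (r,z)$1 - \<sigma> (r,z)$2)/r + s4z (r,z) = 0 \<and>
                  s4r (r,z) + \<sigma> (r,z)$4 / r + s3z (r,z) = 0"
    using eq unfolding equilibrium_C1_def S_def by blast
  note U1' = U1[folded S_def] and U2' = U2[folded S_def]
  have c: "continuous_on S (\<lambda>x. \<sigma> x $ 1)" "continuous_on S (\<lambda>x. \<sigma> x $ 2)"
     "continuous_on S (\<lambda>x. \<sigma> x $ 3)" "continuous_on S (\<lambda>x. \<sigma> x $ 4)"
     "continuous_on S s1r" "continuous_on S s4r" "continuous_on S s4z" "continuous_on S s3z"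
     "continuous_on S ur" "continuous_on S uz" "continuous_on S ur_r" "continuous_on S ur_z"
     "continuous_on S uz_r" "continuous_on S uz_z"
    using C1 U1' U2' by (auto intro: C1_cont C1_cont_r C1_cont_z)
  define Pr where "Pr x = ur x * \<sigma> x$1 + uz x * \<sigma> x$4 + fst x * (ur_r x * \<sigma> x$1 + ur x * s1r x + uz_r x * \<sigma> x$4 + uz x * s4r x)" for x
  define Qz where "Qz x = fst x * (ur_z x * \<sigma> x$4 + ur x * s4z x + uz_z x * \<sigma> x$3 + uz x * s3z x)" for x
  define P where "P x = fst x * (ur x * \<sigma> x$1 + uz x * \<sigma> x$4)" for x
  define Q where "Q x = fst x * (ur x * \<sigma> x$4 + uz x * \<sigma> x$3)" for x
  have cPr: "continuous_on S Pr" unfolding Pr_def[abs_def]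
    by (intro continuous_intros c)
  have cQz: "continuous_on S Qz" unfolding Qz_def[abs_def]
    by (intro continuous_intros c)
  have cQ: "continuous_on S Q" unfolding Q_def[abs_def]
    by (intro continuous_intros c)
  have pt: "(ur_r (r,z) * \<sigma> (r,z)$1 + ur (r,z) / r * \<sigma> (r,z)$2
            + uz_z (r,z) * \<sigma> (r,z)$3 + (ur_z (r,z) + uz_r (r,z)) * \<sigma> (r,z)$4) * r = Pr (r,z) + Qz (r,z)"
    if "(r,z) \<in> S" for r z
  proof -
    have "r > 0" using that assms by (auto simp: S_def)
    have e1: "r * s1r (r,z) = \<sigma> (r,z)$2 - \<sigma> (r,z)$1 - r * s4z (r,z)"
      using E[OF that] \<open>r > 0\<close> by (simp add: field_simps)
    have e2: "r * s4r (r,z) = - \<sigma> (r,z)$4 - r * s3z (r,z)"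
      using E[OF that] \<open>r > 0\<close> by (simp add: field_simps)
    have "Pr (r,z) + Qz (r,z) = ur (r,z) * \<sigma> (r,z)$1 + uz (r,z) * \<sigma> (r,z)$4
       + r * (ur_r (r,z) * \<sigma> (r,z)$1) + ur (r,z) * (r * s1r (r,z)) + r * (uz_r (r,z) * \<sigma> (r,z)$4)
       + uz (r,z) * (r * s4r (r,z))
       + r * (ur_z (r,z) * \<sigma> (r,z)$4 + ur (r,z) * s4z (r,z) + uz_z (r,z) * \<sigma> (r,z)$3 + uz (r,z) * s3z (r,z))"
      unfolding Pr_def Qz_def by (simp add: algebra_simps)
    also have "\<dots> = (ur_r (r,z) * \<sigma> (r,z)$1 + ur (r,z) / r * \<sigma> (r,z)$2
            + uz_z (r,z) * \<sigma> (r,z)$3 + (ur_z (r,z) + uz_r (r,z)) * \<sigma> (r,z)$4) * r"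
      unfolding e1 e2 using \<open>r > 0\<close> by (simp add: field_simps)
    finally show ?thesis by simp
  qed
  have Qint: "((\<lambda>z. Qz (r,z)) has_integral Q (r,b) - Q (r,a)) {a..b}" if r: "r \<in> {ri..ro}" for r
  proof -
   have "((\<lambda>z. Q (r,z)) has_vector_derivative Qz (r,z)) (at z within {a..b})" if z: "z \<in> {a..b}" for z
   proof -
    note d = partial_z[OF C1(4)[unfolded S_def] r z] partial_z[OF C1(3)[unfolded S_def] r z]
       partial_z[OF U1 r z] partial_z[OF U2 r z]
    have "((\<lambda>z. Q (r,z)) has_real_derivative Qz (r,z)) (at z within {a..b})"
      unfolding Q_def Qz_def fst_conv
      by (auto intro!: derivative_eq_intros d simp: algebra_simps)
    then show "((\<lambda>z. Q (r,z)) has_vector_derivative Qz (r,z)) (at z within {a..b})"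
      by (simp add: has_real_derivative_iff_has_vector_derivative)
   qed
   from fundamental_theorem_of_calculus[of a b "\<lambda>z. Q (r,z)" "\<lambda>z. Qz (r,z)", OF \<open>a \<le> b\<close> this] show ?thesis by simp
  qed
  have Pint: "((\<lambda>r. Pr (r,z)) has_integral P (ro,z) - P (ri,z)) {ri..ro}" if z: "z \<in> {a..b}" for z
  proof -
   have "((\<lambda>r. P (r,z)) has_vector_derivative Pr (r,z)) (at r within {ri..ro})" if r: "r \<in> {ri..ro}" for r
   proof -
    note d = partial_r[OF C1(1)[unfolded S_def] r z] partial_r[OF C1(4)[unfolded S_def] r z]
       partial_r[OF U1 r z] partial_r[OF U2 r z]
    have "((\<lambda>r. P (r,z)) has_real_derivative Pr (r,z)) (at r within {ri..ro})"
      unfolding P_def Pr_def fst_conv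
      by (auto intro!: derivative_eq_intros d simp: algebra_simps)
    then show "((\<lambda>r. P (r,z)) has_vector_derivative Pr (r,z)) (at r within {ri..ro})"
      by (simp add: has_real_derivative_iff_has_vector_derivative)
   qed
   from fundamental_theorem_of_calculus[of ri ro "\<lambda>r. P (r,z)" "\<lambda>r. Pr (r,z)", OF \<open>ri \<le> ro\<close> this] show ?thesis by simp
  qed
  have cPr_z: "continuous_on {a..b} (\<lambda>z. Pr (r,z))" if "r \<in> {ri..ro}" for r
    by (rule continuous_on_compose2[OF cPr]) (use that in \<open>auto intro!: continuous_intros simp: S_def\<close>)
  have inner: "integral {a..b} (\<lambda>z. (ur_r (r,z) * \<sigma> (r,z)$1 + ur (r,z) / r * \<sigma> (r,z)$2
            + uz_z (r,z) * \<sigma> (r,z)$3 + (ur_z (r,z) + uz_r (r,z)) * \<sigma> (r,z)$4) * r)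
     = integral {a..b} (\<lambda>z. Pr (r,z)) + (Q (r,b) - Q (r,a))" if r: "r \<in> {ri..ro}" for r
  proof -
    have "integral {a..b} (\<lambda>z. (ur_r (r,z) * \<sigma> (r,z)$1 + ur (r,z) / r * \<sigma> (r,z)$2
            + uz_z (r,z) * \<sigma> (r,z)$3 + (ur_z (r,z) + uz_r (r,z)) * \<sigma> (r,z)$4) * r)
        = integral {a..b} (\<lambda>z. Pr (r,z) + Qz (r,z))"
      by (rule integral_cong, rule pt) (use r in \<open>auto simp: S_def\<close>)
    also have "\<dots> = integral {a..b} (\<lambda>z. Pr (r,z)) + integral {a..b} (\<lambda>z. Qz (r,z))"
      by (rule integral_add) (use cPr_z[OF r] Qint[OF r] in \<open>auto intro: integrable_continuous_interval\<close>)
    also have "integral {a..b} (\<lambda>z. Qz (r,z)) = Q (r,b) - Q (r,a)"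
      using Qint[OF r] by (rule integral_unique)
    finally show ?thesis .
  qed
  have cbS: "cbox (ri,a) (ro,b) = S" unfolding cbox_Pair_eq by (simp add: S_def cbox_interval)
  have swap: "integral {ri..ro} (\<lambda>r. integral {a..b} (\<lambda>z. Pr (r,z)))
      = integral {a..b} (\<lambda>z. integral {ri..ro} (\<lambda>r. Pr (r,z)))"
    using integral_swap_continuous[of ri a ro b "\<lambda>x y. Pr (x,y)", unfolded cbS] cPr
    by (simp add: cbox_interval)
  also have "\<dots> = integral {a..b} (\<lambda>z. P (ro,z) - P (ri,z))"
    by (rule integral_cong) (use Pint in \<open>auto intro: integral_unique\<close>)
  finally have swap': "integral {ri..ro} (\<lambda>r. integral {a..b} (\<lambda>z. Pr (r,z)))
      = integral {a..b} (\<lambda>z. P (ro,z) - P (ri,z))" .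
  have i1: "(\<lambda>r. integral {a..b} (\<lambda>z. Pr (r,z))) integrable_on {ri..ro}"
  proof -
    have "continuous_on {ri..ro} (\<lambda>r. integral (cbox a b) (\<lambda>z. Pr (r,z)))"
      by (rule integral_continuous_on_param) (use cPr in \<open>simp add: S_def cbox_interval\<close>)
    then show ?thesis by (simp add: cbox_interval integrable_continuous_interval)
  qed
  have i2: "(\<lambda>r. Q (r,b) - Q (r,a)) integrable_on {ri..ro}"
  proof -
    have "continuous_on {ri..ro} (\<lambda>r. Q (r,b))"
      by (rule continuous_on_compose2[OF cQ]) (use assms in \<open>auto intro!: continuous_intros simp: S_def\<close>)
    moreover have "continuous_on {ri..ro} (\<lambda>r. Q (r,a))"
      by (rule continuous_on_compose2[OF cQ]) (use assms in \<open>auto intro!: continuous_intros simp: S_def\<close>)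
    ultimately show ?thesis by (intro integrable_continuous_interval continuous_intros)
  qed
  have "((\<lambda>r. integral {a..b} (\<lambda>z. Pr (r,z)) + (Q (r,b) - Q (r,a))) has_integral
      (integral {a..b} (\<lambda>z. P (ro,z) - P (ri,z)) + integral {ri..ro} (\<lambda>r. Q (r,b) - Q (r,a)))) {ri..ro}"
    using has_integral_add[OF i1[THEN integrable_integral] i2[THEN integrable_integral]] swap' by simp
  then have "((\<lambda>r. integral {a..b} (\<lambda>z. (ur_r (r,z) * \<sigma> (r,z)$1 + ur (r,z) / r * \<sigma> (r,z)$2
            + uz_z (r,z) * \<sigma> (r,z)$3 + (ur_z (r,z) + uz_r (r,z)) * \<sigma> (r,z)$4) * r)) has_integral
      (integral {a..b} (\<lambda>z. P (ro,z) - P (ri,z)) + integral {ri..ro} (\<lambda>r. Q (r,b) - Q (r,a)))) {ri..ro}"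
    by (subst has_integral_cong[OF inner]) auto
  then show ?thesis by (simp add: P_def Q_def add.commute)
qed



lemma cont_slice_r:
  "continuous_on ({ri..ro}\<times>{a..b}) f \<Longrightarrow> z \<in> {a..b} \<Longrightarrow> continuous_on {ri..ro} (\<lambda>r. f (r,z))"
  by (rule continuous_on_compose2[of _ f]) (auto intro!: continuous_intros)

lemma cont_slice_z:
  "continuous_on ({ri..ro}\<times>{a..b}) f \<Longrightarrow> r \<in> {ri..ro} \<Longrightarrow> continuous_on {a..b} (\<lambda>z. f (r,z))"
  by (rule continuous_on_compose2[of _ f]) (auto intro!: continuous_intros)

lemma C1_u0:
  assumes "0 < ri"
  shows "C1_partials (\<lambda>x. - c / fst x) (\<lambda>x. c / (fst x)^2) (\<lambda>x. 0) ({ri..ro}\<times>{a..b})"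
  unfolding C1_partials_def
proof (intro conjI ballI)
  fix x assume x: "x \<in> {ri..ro}\<times>{a..b}"
  then have "fst x > 0" using assms by auto
  then have "((\<lambda>x. - c / fst x) has_derivative (\<lambda>h. c / (fst x)^2 * fst h)) (at x within {ri..ro}\<times>{a..b})"
    by (auto intro!: derivative_eq_intros simp: power2_eq_square field_simps)
  moreover have "(\<lambda>h. c / (fst x)^2 * fst h) = (\<lambda>(a', b'). c / (fst x)^2 * a' + 0 * b')"
    by auto
  ultimately show "((\<lambda>x. - c / fst x) has_derivative (\<lambda>(a', b'). c / (fst x)^2 * a' + 0 * b')) (at x within {ri..ro}\<times>{a..b})"
    by simp
next
  show "continuous_on ({ri..ro}\<times>{a..b}) (\<lambda>x. c / (fst x)^2)"
    using assms by (intro continuous_intros) auto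
qed auto

lemma C1_zero: "C1_partials (\<lambda>x. 0) (\<lambda>x. 0) (\<lambda>x. 0) S"
  unfolding C1_partials_def by (auto intro!: derivative_eq_intros)



lemma green_eq:
  assumes "(f has_integral (I1 + I2)) S" "I1 = J" "I2 = 0" "\<And>r. r \<in> S \<Longrightarrow> f r = g r"
  shows "(g has_integral J) S"
  using assms has_integral_cong by (metis add_0_right)

lemma int_zero: "(\<And>x. x \<in> S \<Longrightarrow> f x = 0) \<Longrightarrow> integral S f = 0"
  by (metis (mono_tags, lifting) integral_0 integral_cong)

theorem mainTheorem2:
  fixes ri ro h H n p :: real
    and sm sp :: "real \<times> real \<Rightarrow> real^4"
    and urm uzm urp uzp :: "real \<times> real \<Rightarrow> real"
  assumes "0 < ri" "ri < ro" "0 < h" "h < H" "0 < n" "0 < p"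
    and eqm: "equilibrium_C1 ({ri..ro} \<times> {0..h}) sm"
    and eqp: "equilibrium_C1 ({ri..ro} \<times> {h..H}) sp"
    and bcm: "\<forall>z\<in>{0..h}. \<forall>r\<in>{ri, ro}. sm (r, z) $ 1 = 0 \<and> sm (r, z) $ 4 = 0"
    and bcp: "\<forall>z\<in>{h..H}. \<forall>r\<in>{ri, ro}. sp (r, z) $ 1 = 0 \<and> sp (r, z) $ 4 = 0"
    and bcm0: "\<forall>r\<in>{ri..ro}. sm (r, 0) $ 4 = 0"
    and bcpH: "\<forall>r\<in>{ri..ro}. sp (r, H) $ 4 = 0"
    and compm: "compatible ri ro p n ({ri..ro} \<times> {0..h}) urm uzm sm"
    and compp: "compatible ri ro p n ({ri..ro} \<times> {h..H}) urp uzp sp"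
    and um0: "\<forall>r\<in>{ri..ro}. uzm (r, 0) = 0"
    and upH: "\<forall>r\<in>{ri..ro}. uzp (r, H) = 0"
    and iface: "\<forall>r\<in>{ri..ro}.
        sp (r, h) $ 4 = sm (r, h) $ 4 \<and> sp (r, h) $ 3 = sm (r, h) $ 3 \<and>
        uzp (r, h) = uzm (r, h) \<and>
        urp (r, h) - urm (r, h) =
          (let ar = coef_ar ri ro p n
           in 3 powr ((n - 1) / 2) * ar * \<bar>ar\<bar> powr (n - 1) * n powr (- n)) / r"
    and adm: "admissible ri ro H \<delta>\<sigma>"
  shows "integral {ri..ro} (\<lambda>r. integral {0..H} (\<lambda>z.
            ((if z < h then sm (r, z) else sp (r, z)) \<bullet> (compliance ri ro p n r *v \<delta>\<sigma> (r, z))) * r))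
       = integral {ri..ro} (\<lambda>r. integral {0..h} (\<lambda>z.
            (epsdot n (sigma0 ri ro p n r) \<bullet> \<delta>\<sigma> (r, z)) * r))"
  proof -
  define c where "c = (let ar = coef_ar ri ro p n
           in 3 powr ((n - 1) / 2) * ar * \<bar>ar\<bar> powr (n - 1) * n powr (- n))"
  define Sm where "Sm = {ri..ro} \<times> {0..h}"
  define Sp where "Sp = {ri..ro} \<times> {h..H}"
  define d where "d = \<delta>\<sigma>"
  have ri: "0 < ri" "ri \<le> ro" using assms(1,2) by auto
  have SmS: "Sm \<subseteq> {ri..ro} \<times> {0..H}" "Sp \<subseteq> {ri..ro} \<times> {0..H}" using assms(3,4) by (auto simp: Sm_def Sp_def)
  have eqA: "equilibrium_C1 ({ri..ro} \<times> {0..H}) d" and bcr: "\<forall>z\<in>{0..H}. \<forall>r\<in>{ri, ro}. d (r, z) $ 1 = 0 \<and> d (r, z) $ 4 = 0"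
    and bcz: "\<forall>r\<in>{ri..ro}. \<forall>z\<in>{0, H}. d (r, z) $ 4 = 0"
    using adm unfolding admissible_def d_def by auto
  have eqdm: "equilibrium_C1 ({ri..ro} \<times> {0..h}) d" using eq_subset[OF eqA SmS(1)] by (simp add: Sm_def)
  have eqdp: "equilibrium_C1 ({ri..ro} \<times> {h..H}) d" using eq_subset[OF eqA SmS(2)] by (simp add: Sp_def)
  obtain dr1 dz1 dr2 dz2 dr3 dz3 dr4 dz4 where
    dC1: "C1_partials (\<lambda>x. d x $ 1) dr1 dz1 ({ri..ro} \<times> {0..H})" "C1_partials (\<lambda>x. d x $ 2) dr2 dz2 ({ri..ro} \<times> {0..H})"
      "C1_partials (\<lambda>x. d x $ 3) dr3 dz3 ({ri..ro} \<times> {0..H})" "C1_partials (\<lambda>x. d x $ 4) dr4 dz4 ({ri..ro} \<times> {0..H})"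
    using eqA unfolding equilibrium_C1_def by blast
  have dc: "continuous_on ({ri..ro} \<times> {0..H}) (\<lambda>x. d x $ i)" for i
  proof -
    have "i = 1 \<or> i = 2 \<or> i = 3 \<or> i = 4" by (rule exhaust_4)
    then show ?thesis using dC1 by (auto intro: C1_cont)
  qed
  have dcm: "continuous_on Sm (\<lambda>x. d x $ i)" for i using continuous_on_subset[OF dc SmS(1)] .
  have dcp: "continuous_on Sp (\<lambda>x. d x $ i)" for i using continuous_on_subset[OF dc SmS(2)] .
  obtain urm_r urm_z uzm_r uzm_z where
    Um: "C1_partials urm urm_r urm_z Sm" "C1_partials uzm uzm_r uzm_z Sm"
    and strm: "\<And>r z. (r, z) \<in> Sm \<Longrightarrow>
           vec4 (urm_r (r, z)) (urm (r, z) / r) (uzm_z (r, z)) (urm_z (r, z) + uzm_r (r, z))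
             = compliance ri ro p n r *v sm (r, z)"
    using compm unfolding compatible_def Sm_def by blast
  obtain urp_r urp_z uzp_r uzp_z where
    Up: "C1_partials urp urp_r urp_z Sp" "C1_partials uzp uzp_r uzp_z Sp"
    and strp: "\<And>r z. (r, z) \<in> Sp \<Longrightarrow>
           vec4 (urp_r (r, z)) (urp (r, z) / r) (uzp_z (r, z)) (urp_z (r, z) + uzp_r (r, z))
             = compliance ri ro p n r *v sp (r, z)"
    using compp unfolding compatible_def Sp_def by blast
  have mG: "0 < mG (sigma0 ri ro p n r)" if "r \<in> {ri..ro}" for r
    using sigma0_facts(1)[of ri ro n p r] that assms(1-6) by auto
  define Fm where "Fm r z = (urm_r (r,z) * d (r,z)$1 + urm (r,z) / r * d (r,z)$2
            + uzm_z (r,z) * d (r,z)$3 + (urm_z (r,z) + uzm_r (r,z)) * d (r,z)$4) * r" for r z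
  define Fp where "Fp r z = (urp_r (r,z) * d (r,z)$1 + urp (r,z) / r * d (r,z)$2
            + uzp_z (r,z) * d (r,z)$3 + (urp_z (r,z) + uzp_r (r,z)) * d (r,z)$4) * r" for r z
  have cFm: "continuous_on Sm (\<lambda>x. Fm (fst x) (snd x))"
  proof -
    have "continuous_on Sm (\<lambda>x. (urm_r x * d x$1 + urm x / fst x * d x$2
            + uzm_z x * d x$3 + (urm_z x + uzm_r x) * d x$4) * fst x)"
    proof -
      have cm: "continuous_on Sm urm" "continuous_on Sm urm_r" "continuous_on Sm urm_z"
          "continuous_on Sm uzm" "continuous_on Sm uzm_r" "continuous_on Sm uzm_z"
        using Um by (auto intro: C1_cont C1_cont_r C1_cont_z)
      show ?thesis using ri by (intro continuous_intros dcm cm) (auto simp: Sm_def)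
    qed
    then show ?thesis by (simp add: Fm_def)
  qed
  have cFp: "continuous_on Sp (\<lambda>x. Fp (fst x) (snd x))"
  proof -
    have "continuous_on Sp (\<lambda>x. (urp_r x * d x$1 + urp x / fst x * d x$2
            + uzp_z x * d x$3 + (urp_z x + uzp_r x) * d x$4) * fst x)"
    proof -
      have cm: "continuous_on Sp urp" "continuous_on Sp urp_r" "continuous_on Sp urp_z"
          "continuous_on Sp uzp" "continuous_on Sp uzp_r" "continuous_on Sp uzp_z"
        using Up by (auto intro: C1_cont C1_cont_r C1_cont_z)
      show ?thesis using ri by (intro continuous_intros dcp cm) (auto simp: Sp_def)
    qed
    then show ?thesis by (simp add: Fp_def)
  qed
  have ptm: "sm (r,z) \<bullet> (compliance ri ro p n r *v \<delta>\<sigma> (r, z)) * r = Fm r z" if "(r,z) \<in> Sm" for r z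
  proof -
    have "sm (r,z) \<bullet> (compliance ri ro p n r *v \<delta>\<sigma> (r, z)) = (compliance ri ro p n r *v sm (r,z)) \<bullet> d (r,z)"
      unfolding d_def using that by (intro compliance_sym mG) (auto simp: Sm_def)
    also have "\<dots> = vec4 (urm_r (r, z)) (urm (r, z) / r) (uzm_z (r, z)) (urm_z (r, z) + uzm_r (r, z)) \<bullet> d (r,z)"
      using strm[OF that] by simp
    finally show ?thesis by (simp add: Fm_def inner_vec4)
  qed
  have ptp: "sp (r,z) \<bullet> (compliance ri ro p n r *v \<delta>\<sigma> (r, z)) * r = Fp r z" if "(r,z) \<in> Sp" for r z
  proof -
    have "sp (r,z) \<bullet> (compliance ri ro p n r *v \<delta>\<sigma> (r, z)) = (compliance ri ro p n r *v sp (r,z)) \<bullet> d (r,z)"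
      unfolding d_def using that by (intro compliance_sym mG) (auto simp: Sp_def)
    also have "\<dots> = vec4 (urp_r (r, z)) (urp (r, z) / r) (uzp_z (r, z)) (urp_z (r, z) + uzp_r (r, z)) \<bullet> d (r,z)"
      using strp[OF that] by simp
    finally show ?thesis by (simp add: Fp_def inner_vec4)
  qed
  have split: "integral {0..H} (\<lambda>z. ((if z < h then sm (r, z) else sp (r, z)) \<bullet> (compliance ri ro p n r *v \<delta>\<sigma> (r, z))) * r)
      = integral {0..h} (Fm r) + integral {h..H} (Fp r)" if r: "r \<in> {ri..ro}" for r
  proof -
    let ?g = "\<lambda>z. ((if z < h then sm (r, z) else sp (r, z)) \<bullet> (compliance ri ro p n r *v \<delta>\<sigma> (r, z))) * r"
    have "continuous_on {0..h} (\<lambda>z. Fm (fst (r,z)) (snd (r,z)))"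
      using cont_slice_z[OF cFm[unfolded Sm_def] r] by simp
    then have hm: "(Fm r has_integral integral {0..h} (Fm r)) {0..h}"
      by (simp add: integrable_continuous_interval integrable_integral)
    have i1: "(?g has_integral integral {0..h} (Fm r)) {0..h}"
      by (rule has_integral_spike_finite[of "{h}" "{0..h}" ?g "Fm r", OF _ _ hm]) (use r in \<open>auto intro!: ptm simp: Sm_def\<close>)
    have "continuous_on {h..H} (\<lambda>z. Fp (fst (r,z)) (snd (r,z)))"
      using cont_slice_z[OF cFp[unfolded Sp_def] r] by simp
    then have hp: "(Fp r has_integral integral {h..H} (Fp r)) {h..H}"
      by (simp add: integrable_continuous_interval integrable_integral)
    have i2: "(?g has_integral integral {h..H} (Fp r)) {h..H}"
      by (rule has_integral_spike_finite[of "{}" "{h..H}" ?g "Fp r", OF _ _ hp]) (use r in \<open>auto intro!: ptp simp: Sp_def\<close>)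
    have "(?g has_integral integral {0..h} (Fm r) + integral {h..H} (Fp r)) {0..H}"
      using has_integral_combine[OF _ _ i1 i2] assms(3,4) by auto
    then show ?thesis by (rule integral_unique)
  qed
  have h0: "0 \<le> h" "h \<le> H" using assms(3,4) by auto
  note gm = green[OF ri(1) ri(2) h0(1) eqdm Um[unfolded Sm_def]]
  note gp = green[OF ri(1) ri(2) h0(2) eqdp Up[unfolded Sp_def]]
  note g0 = green[OF ri(1) ri(2) h0(1) eqdm C1_u0[OF ri(1), of c ro 0 h] C1_zero]
  have iface': "\<forall>r\<in>{ri..ro}. uzp (r, h) = uzm (r, h) \<and> urp (r, h) - urm (r, h) = c / r"
    using iface unfolding c_def by auto
  have s0: "epsdot n (sigma0 ri ro p n r) = vec4 (c / r^2) (-(c / r^2)) 0 0" if "r \<in> {ri..ro}" for r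
    using sigma0_facts(2)[of ri ro n p r] that assms(1-6) unfolding c_def by auto
  define Am where "Am r = r * (urm (r,h) * d (r,h)$4 + uzm (r,h) * d (r,h)$3)" for r
  define Ap where "Ap r = r * (urp (r,h) * d (r,h)$4 + uzp (r,h) * d (r,h)$3)" for r
  have GM: "((\<lambda>r. integral {0..h} (Fm r)) has_integral integral {ri..ro} Am) {ri..ro}"
    apply (rule green_eq[OF gm])
      apply (rule integral_cong)
      subgoal for r using bcz um0 by (auto simp: Am_def)
     apply (rule int_zero)
     subgoal for z using bcr h0 by auto
    apply (simp add: Fm_def[abs_def])
    done
  have GP: "((\<lambda>r. integral {h..H} (Fp r)) has_integral integral {ri..ro} (\<lambda>r. - Ap r)) {ri..ro}"
    apply (rule green_eq[OF gp])
      apply (rule integral_cong)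
      subgoal for r using bcz upH by (auto simp: Ap_def)
     apply (rule int_zero)
     subgoal for z using bcr h0 by auto
    apply (simp add: Fp_def[abs_def])
    done
  have G0: "((\<lambda>r. integral {0..h} (\<lambda>z. (epsdot n (sigma0 ri ro p n r) \<bullet> \<delta>\<sigma> (r, z)) * r))
      has_integral integral {ri..ro} (\<lambda>r. - c * d (r,h)$4)) {ri..ro}"
    apply (rule green_eq[OF g0])
      apply (rule integral_cong)
      subgoal for r using bcz ri by auto
     apply (rule int_zero)
     subgoal for z using bcr h0 by auto
    apply (rule integral_cong)
    subgoal for r z using ri by (auto simp: s0 inner_vec4 d_def field_simps power2_eq_square)
    done
  have cAm: "continuous_on {ri..ro} Am"
  proof -
    have cm: "continuous_on Sm urm" "continuous_on Sm uzm"
      using Um by (auto intro: C1_cont)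
    have "continuous_on {ri..ro} (\<lambda>r. r * (urm (r,h) * d (r,h)$4 + uzm (r,h) * d (r,h)$3))"
      using h0 by (intro continuous_intros cont_slice_r[of ri ro 0 h] cm[unfolded Sm_def] dcm[unfolded Sm_def]) auto
    then show ?thesis by (simp add: Am_def[abs_def])
  qed
  have cAp: "continuous_on {ri..ro} Ap"
  proof -
    have cm: "continuous_on Sp urp" "continuous_on Sp uzp"
      using Up by (auto intro: C1_cont)
    have "continuous_on {ri..ro} (\<lambda>r. r * (urp (r,h) * d (r,h)$4 + uzp (r,h) * d (r,h)$3))"
      using h0 by (intro continuous_intros cont_slice_r[of ri ro h H] cm[unfolded Sp_def] dcp[unfolded Sp_def]) auto
    then show ?thesis by (simp add: Ap_def[abs_def])
  qed
  have "integral {ri..ro} (\<lambda>r. integral {0..H} (\<lambda>z.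
            ((if z < h then sm (r, z) else sp (r, z)) \<bullet> (compliance ri ro p n r *v \<delta>\<sigma> (r, z))) * r))
      = integral {ri..ro} (\<lambda>r. integral {0..h} (Fm r) + integral {h..H} (Fp r))"
    by (rule integral_cong) (rule split)
  also have "\<dots> = integral {ri..ro} Am + integral {ri..ro} (\<lambda>r. - Ap r)"
    using has_integral_add[OF GM GP] by (rule integral_unique)
  also have "\<dots> = integral {ri..ro} (\<lambda>r. Am r + - Ap r)"
    by (rule integral_add[symmetric]) (use cAm cAp in \<open>auto intro!: integrable_continuous_interval continuous_intros\<close>)
  also have "\<dots> = integral {ri..ro} (\<lambda>r. - c * d (r,h)$4)"
  proof (rule integral_cong)
    fix r assume r: "r \<in> {ri..ro}"
    then have "r > 0" using ri by auto
    have ii: "uzp (r, h) = uzm (r, h) \<and> urp (r, h) - urm (r, h) = c / r" using iface' r by blast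
    then have "urm (r,h) = urp (r,h) - c / r" "uzp (r,h) = uzm (r,h)" by linarith+
    then have e: "r * (urm (r,h) - urp (r,h)) = - c" and e2: "uzp (r,h) = uzm (r,h)"
      using \<open>r > 0\<close> by (simp_all add: field_simps)
    have "Am r + - Ap r = (r * (urm (r,h) - urp (r,h))) * d (r,h)$4"
      by (simp add: Am_def Ap_def e2 algebra_simps)
    then show "Am r + - Ap r = - c * d (r,h)$4" by (simp only: e)
  qed
  also have "\<dots> = integral {ri..ro} (\<lambda>r. integral {0..h} (\<lambda>z. (epsdot n (sigma0 ri ro p n r) \<bullet> \<delta>\<sigma> (r, z)) * r))"
    using G0 by (rule integral_unique[symmetric])
  finally show ?thesis .
qed

end
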